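(* Let $F_{i,l}(x)$, for integers $i\ge0$ and $-1\le l\le i+1$, be the polynomials defined recursively by $F_{0,0}(x)=1$, $F_{i,-1}(x)=F_{i,i+1}(x)=0$, and $$F_{i+1,l}(x)=F_{i,l-1}(x)-(2i+1-l)\,x\,F_{i,l}(x)+(x^2-4)F'_{i,l}(x)\quad(0\le l\le i+1).$$ Then (1) $F_{i,i}(x)=1$ for all $i\ge0$; (2) for each $k\ge0$, $F_{i+k,i}(x)$ has degree $k$ for every $i\ge0$; (3) $F_{i+1,i}(x)=-x\binom{i+2}{2}$ for all $i\ge0$.
   Context: $F'_{i,l}$ denotes the derivative of $F_{i,l}$ with respect to $x$. *)

theory Defs
  imports "HOL-Computational_Algebra.Polynomial"
begin

text \<open>F i l for i \<ge> 0 and -1 \<le> l \<le> i+1; values outside this range are set to 0,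
  which in particular gives F i (-1) = F i (i+1) = 0.\<close>
fun F :: "nat \<Rightarrow> int \<Rightarrow> int poly" where
  "F 0 l = (if l = 0 then 1 else 0)"
| "F (Suc i) l =
     (if 0 \<le> l \<and> l \<le> int i + 1 then
        F i (l - 1) - smult (2 * int i + 1 - l) ([:0, 1:] * F i l)
          + [:-4, 0, 1:] * pderiv (F i l)
      else 0)"

end

theory Submission
  imports Defs
begin

lemma F_zero: "l < 0 \<or> l > int n \<Longrightarrow> F n l = 0"
  by (cases n) auto

declare F.simps(2)[simp del]

lemma coeff_F_Suc:
  "coeff (F (Suc n) l) j =
    (if 0 \<le> l \<and> l \<le> int n + 1 then
       coeff (F n (l - 1)) j
       + (if j = 0 then 0 else (int j - 1 - (2 * int n + 1 - l)) * coeff (F n l) (j - 1))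
       - 4 * (int j + 1) * coeff (F n l) (Suc j)
     else 0)"
proof (cases "0 \<le> l \<and> l \<le> int n + 1")
  case True
  define p where "p = F n l"
  have e: "[:-4, 0, 1:] * pderiv p = smult (-4) (pderiv p) + pCons 0 (pCons 0 (pderiv p))"
    by (simp add: algebra_simps)
  have "coeff (F (Suc n) l) j = coeff (F n (l - 1)) j - (2 * int n + 1 - l) * coeff (pCons 0 p) j
      + (-4) * coeff (pderiv p) j + coeff (pCons 0 (pCons 0 (pderiv p))) j"
    using True by (simp add: F.simps(2) p_def e coeff_pderiv coeff_pCons split: nat.split)
  also have "\<dots> = coeff (F n (l - 1)) j
       + (if j = 0 then 0 else (int j - 1 - (2 * int n + 1 - l)) * coeff p (j - 1))
       - 4 * (int j + 1) * coeff p (Suc j)"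
  proof (cases j)
    case 0 then show ?thesis by (simp add: coeff_pderiv algebra_simps)
  next
    case (Suc m)
    then show ?thesis
      by (cases m) (simp_all add: coeff_pderiv algebra_simps)
  qed
  finally show ?thesis using True by (simp add: p_def)
next
  case False
  have "F (Suc n) l = 0" by (simp only: F.simps(2) False if_False)
  then show ?thesis by (simp only: False if_False coeff_0)
qed

lemma F_deg: "int j + l > int n \<Longrightarrow> coeff (F n l) j = 0"
proof (induction n arbitrary: l j)
  case 0
  then show ?case by (cases j) auto
next
  case (Suc n)
  show ?case
    using Suc.prems
    by (simp add: coeff_F_Suc Suc.IH)
qed

lemma F_lead: "i \<le> n \<Longrightarrow> (-1) ^ (n - i) * coeff (F n (int i)) (n - i) > 0"
proof (induction n arbitrary: i)
  case 0
  then show ?case by simp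
next
  case (Suc n)
  show ?case
  proof (cases "i = Suc n")
    case True
    have a: "coeff (F n (int n)) 0 > 0" using Suc.IH[of n] by simp
    have b: "coeff (F n (int n)) 1 = 0" by (rule F_deg) simp
    have z: "F n (1 + int n) = 0" by (rule F_zero) simp
    show ?thesis using True a b z by (simp add: coeff_F_Suc)
  next
    case False
    then have ile: "i \<le> n" using Suc.prems by simp
    define k where "k = n - i"
    have nk: "Suc n - i = Suc k" using ile k_def by simp
    have p0: "(-1) ^ k * coeff (F n (int i)) k > 0" using Suc.IH[OF ile] k_def by simp
    have p2: "coeff (F n (int i)) (Suc (Suc k)) = 0" by (rule F_deg) (simp add: k_def ile)
    have c1: "(-1) ^ Suc k * coeff (F n (int i - 1)) (Suc k) \<ge> 0"
    proof (cases i)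
      case 0 then show ?thesis by (simp add: F_zero)
    next
      case (Suc i')
      have "int i - 1 = int i'" using Suc by simp
      moreover have "n - i' = Suc k" using Suc k_def ile by simp
      ultimately show ?thesis using Suc.IH[of i'] Suc ile by (simp del: power_Suc)
    qed
    have eq: "coeff (F (Suc n) (int i)) (Suc k) = coeff (F n (int i - 1)) (Suc k)
        - (int n + 1) * coeff (F n (int i)) k"
      using ile p2 by (simp add: coeff_F_Suc k_def algebra_simps)
    have "(-1) ^ Suc k * coeff (F (Suc n) (int i)) (Suc k)
        = (-1) ^ Suc k * coeff (F n (int i - 1)) (Suc k) + (int n + 1) * ((-1) ^ k * coeff (F n (int i)) k)"
      by (simp add: eq algebra_simps)
    also have "\<dots> > 0"
    proof -
      have "(int n + 1) * ((-1) ^ k * coeff (F n (int i)) k) > 0"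
        using mult_pos_pos[OF _ p0, of "int n + 1"] by simp
      then show ?thesis using c1 by linarith
    qed
    finally show ?thesis using nk by simp
  qed
qed

lemma F_diag: "F i (int i) = 1"
proof (induction i)
  case 0 then show ?case by simp
next
  case (Suc i)
  have "F i (int i + 1) = 0" "F i (1 + int i) = 0" by (rule F_zero, simp)+
  then show ?case using Suc by (simp add: F.simps(2))
qed

lemma F_sub: "F (i + 1) (int i) = - (smult (of_nat ((i + 2) choose 2)) [:0, 1:])"
proof (induction i)
  case 0 then show ?case by (simp add: F_zero F.simps(2) numeral_2_eq_2)
next
  case (Suc i)
  have h: "F (Suc i) (int (Suc i)) = 1" by (rule F_diag)
  have c: "(Suc (Suc (Suc i)) choose 2) = (Suc (Suc i) choose 2) + Suc (Suc i)"
    by (simp add: numeral_2_eq_2)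
  have "F (Suc i + 1) (int (Suc i)) = F (Suc (Suc i)) (int (Suc i))" by simp
  also have "\<dots> = F (Suc i) (int i) - smult (int i + 2) [:0, 1:]"
    using h by (simp add: F.simps(2) algebra_simps)
  also have "\<dots> = - smult (of_nat ((Suc i + 2) choose 2)) [:0, 1:]"
  proof -
    have c': "int (Suc (Suc (Suc i)) choose 2) = int i + (2 + int (Suc (Suc i) choose 2))"
      using c by simp
    show ?thesis using Suc.IH c' by (simp add: smult_add_left algebra_simps)
  qed
  finally show ?case .
qed

theorem lemma6p3:
  shows "(\<forall>i::nat. F i (int i) = 1)
       \<and> (\<forall>k i::nat. degree (F (i + k) (int i)) = k)
       \<and> (\<forall>i::nat. F (i + 1) (int i) = - (smult (of_nat ((i + 2) choose 2)) [:0, 1:]))"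
proof (intro conjI allI)
  fix i show "F i (int i) = 1" by (rule F_diag)
next
  fix i show "F (i + 1) (int i) = - (smult (of_nat ((i + 2) choose 2)) [:0, 1:])" by (rule F_sub)
next
  fix k i
  have "degree (F (i + k) (int i)) \<le> k"
    by (rule degree_le) (auto intro: F_deg)
  moreover have "coeff (F (i + k) (int i)) k \<noteq> 0"
    using F_lead[of i "i + k"] by auto
  then have "k \<le> degree (F (i + k) (int i))" by (rule le_degree)
  ultimately show "degree (F (i + k) (int i)) = k" by simp
qed

end
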